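(* For any contraction $C\in M_n(\mathbb{C})$, the following are equivalent: (i) every level $T_j$ ($j\ge0$) of the partial isometry tower of $C$ has the Circularity property; (ii) $C$ has defect-pencil Circularity.
   Context: For $X\in M_n(\mathbb{C})$, $H_X(\theta):=\frac12(e^{-i\theta}X+e^{i\theta}X^* )$. $X$ has the Circularity property if the spectrum of $H_X(\theta)$ is independent of $\theta\in\mathbb{R}$. A contraction is a matrix with $\|C\|\le1$. A contraction $C$ has defect-pencil Circularity if for every real $\tau$ the spectrum of $H_C(\theta)+\tau(I-C^*C)$ is independent of $\theta$. For a contraction $C$: $D_C=I-C^*C$, $d=\operatorname{rank}D_C$, $B_C$ is a $d\times n$ matrix of full row rank with $B_C^*B_C=D_C$ (matrix of $D_C^{1/2}$ on $\operatorname{Im}D_C$, zero on its complement), $\mathcal{A}(C)=\begin{bmatrix}0&B_C\\0&C\end{bmatrix}$, and the partial isometry tower is $T_0=C$, $T_{j+1}=\mathcal{A}(T_j)$. *)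

theory Defs
  imports "Jordan_Normal_Form.Spectral_Radius" "Jordan_Normal_Form.Schur_Decomposition" "Jordan_Normal_Form.DL_Rank"
begin

definition herm_part :: "complex mat \<Rightarrow> real \<Rightarrow> complex mat" where
  "herm_part X \<theta> = (1/2 :: complex) \<cdot>\<^sub>m
     (exp (- \<i> * of_real \<theta>) \<cdot>\<^sub>m X + exp (\<i> * of_real \<theta>) \<cdot>\<^sub>m mat_adjoint X)"

definition circularity :: "complex mat \<Rightarrow> bool" where
  "circularity X \<longleftrightarrow> (\<forall>\<theta> \<theta>'. spectrum (herm_part X \<theta>) = spectrum (herm_part X \<theta>'))"

definition contraction :: "complex mat \<Rightarrow> bool" where
  "contraction C \<longleftrightarrow> square_mat C \<and>
     (\<forall>v \<in> carrier_vec (dim_col C).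
        Re ((C *\<^sub>v v) \<bullet> conjugate (C *\<^sub>v v)) \<le> Re (v \<bullet> conjugate v))"

definition defect :: "complex mat \<Rightarrow> complex mat" where
  "defect C = 1\<^sub>m (dim_col C) - mat_adjoint C * C"

definition defect_pencil_circularity :: "complex mat \<Rightarrow> bool" where
  "defect_pencil_circularity C \<longleftrightarrow>
     (\<forall>\<tau>::real. \<forall>\<theta> \<theta>'.
        spectrum (herm_part C \<theta> + complex_of_real \<tau> \<cdot>\<^sub>m defect C)
        = spectrum (herm_part C \<theta>' + complex_of_real \<tau> \<cdot>\<^sub>m defect C))"

definition mat_rank :: "complex mat \<Rightarrow> nat" where
  "mat_rank A = vec_space.rank (dim_row A) A"

definition is_defect_factor :: "complex mat \<Rightarrow> complex mat \<Rightarrow> bool" where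
  "is_defect_factor C B \<longleftrightarrow>
     B \<in> carrier_mat (mat_rank (defect C)) (dim_col C) \<and>
     mat_rank B = dim_row B \<and>
     mat_adjoint B * B = defect C"

definition defect_factor :: "complex mat \<Rightarrow> complex mat" where
  "defect_factor C = (SOME B. is_defect_factor C B)"

definition tower_step :: "complex mat \<Rightarrow> complex mat" where
  "tower_step C = (let B = defect_factor C; d = dim_row B; n = dim_col C in
     four_block_mat (0\<^sub>m d d) B (0\<^sub>m n d) C)"

definition tower :: "complex mat \<Rightarrow> nat \<Rightarrow> complex mat" where
  "tower C j = (tower_step ^^ j) C"

end

theory Submission imports Defs "HOL-Analysis.Elementary_Normed_Spaces" begin
lemma adj_dim[simp]: "dim_row (mat_adjoint A) = dim_col A" "dim_col (mat_adjoint A) = dim_row A"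
  unfolding mat_adjoint_def by auto

lemma adj_index[simp]: "i < dim_col A \<Longrightarrow> j < dim_row A \<Longrightarrow> mat_adjoint A $$ (i,j) = conjugate (A $$ (j,i))"
  unfolding mat_adjoint_def by (auto simp: mat_of_rows_def)
lemma adj_carrier[simp]: "A \<in> carrier_mat n m \<Longrightarrow> mat_adjoint A \<in> carrier_mat m n"
  by (metis adj_dim carrier_matD carrier_matI)
lemma herm_part_dim[simp]: "dim_row (herm_part X t) = dim_col X" "dim_col (herm_part X t) = dim_row X"
  unfolding herm_part_def by auto

lemma herm_part_carrier[simp]: "X \<in> carrier_mat n n \<Longrightarrow> herm_part X t \<in> carrier_mat n n"
  by (metis herm_part_dim carrier_matD(1,2) carrier_matI)

lemma herm_part_index: "X \<in> carrier_mat n n \<Longrightarrow> i < n \<Longrightarrow> j < n \<Longrightarrow>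
  herm_part X t $$ (i,j) = (1/2) * (exp (- \<i> * of_real t) * X $$ (i,j) + exp (\<i> * of_real t) * cnj (X $$ (j,i)))"
  unfolding herm_part_def by auto

lemma defect_carrier[simp]: "X \<in> carrier_mat n n \<Longrightarrow> defect X \<in> carrier_mat n n"
  unfolding defect_def by auto

lemma defect_dim[simp]: "dim_row (defect X) = dim_col X" "dim_col (defect X) = dim_col X"
  unfolding defect_def by auto

lemma continuous_det:
  fixes M :: "real \<Rightarrow> complex mat"
  assumes car: "\<And>t. M t \<in> carrier_mat n n"
    and cont: "\<And>i j. i < n \<Longrightarrow> j < n \<Longrightarrow> continuous_on S (\<lambda>t. M t $$ (i,j))"
  shows "continuous_on S (\<lambda>t. det (M t))"
proof -
  have eq: "(\<lambda>t. det (M t)) = (\<lambda>t. \<Sum>p\<in>{p. p permutes {0..<n}}. of_int (sign p) * (\<Prod>i=0..<n. M t $$ (i, p i)))"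
    using det_def'[OF car] by auto
  show ?thesis unfolding eq
  proof (intro continuous_on_sum continuous_on_mult continuous_on_const continuous_on_prod)
    fix p i assume "p \<in> {p. p permutes {0..<n}}" "i \<in> {0..<n}"
    then have "i < n" "p i < n" by (auto simp: permutes_in_image)
    then show "continuous_on S (\<lambda>t. M t $$ (i, p i))" using cont by auto
  qed
qed

lemma spectrum_const_imp_charpoly_const:
  fixes M :: "real \<Rightarrow> complex mat"
  assumes car: "\<And>t. M t \<in> carrier_mat n n"
    and cont: "\<And>i j. i < n \<Longrightarrow> j < n \<Longrightarrow> continuous_on UNIV (\<lambda>t. M t $$ (i,j))"
    and sp: "\<And>t. spectrum (M t) = spectrum (M 0)"
  shows "char_poly (M t) = char_poly (M 0)"
proof -
  define S where "S = spectrum (M 0)"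
  have finS: "finite S" unfolding S_def using card_finite_spectrum[OF car] by auto
  define Q where "Q = (\<lambda>as. \<Prod>a\<leftarrow>as. [:-a,1:]) ` {as. set as \<subseteq> S \<and> length as = n}"
  have finQ: "finite Q" unfolding Q_def using finite_lists_length_eq[OF finS] by auto
  have inQ: "char_poly (M t) \<in> Q" for t
  proof -
    obtain as where as: "char_poly (M t) = (\<Prod>a\<leftarrow>as. [:-a,1:])" "length as = n"
      using char_poly_factorized[OF car] by blast
    have "set as \<subseteq> S"
    proof
      fix a assume a: "a \<in> set as"
      have "poly (char_poly (M t)) a = 0" unfolding as(1) poly_prod_list
        using a by (induct as) auto
      then have "a \<in> spectrum (M t)" using spectrum_root_char_poly[OF car] by auto
      then show "a \<in> S" using sp S_def by auto
    qed
    then show ?thesis unfolding Q_def using as by auto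
  qed
  have "poly (char_poly (M t)) z = poly (char_poly (M 0)) z" for z
  proof -
    define f where "f = (\<lambda>t. poly (char_poly (M t)) z)"
    have f_eq: "f = (\<lambda>t. det (- char_matrix (M t) z))"
      unfolding f_def using char_poly_matrix[OF car] by auto
    have cf: "continuous_on UNIV f" unfolding f_eq
    proof (rule continuous_det[where n = n])
      show "- char_matrix (M t) z \<in> carrier_mat n n" for t using car[of t] by auto
      fix i j assume ij: "i < n" "j < n"
      have "(- char_matrix (M t) z) $$ (i,j) = - (M t $$ (i,j) + (if i = j then -z else 0))" for t
        using car[of t] ij by (auto simp: char_matrix_def)
      then have eqf: "(\<lambda>t. (- char_matrix (M t) z) $$ (i,j)) = (\<lambda>t. - (M t $$ (i,j) + (if i = j then -z else 0)))"
        by auto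
      show "continuous_on UNIV (\<lambda>t. (- char_matrix (M t) z) $$ (i,j))"
        unfolding eqf by (intro continuous_intros cont[OF ij])
    qed
    have "f ` UNIV \<subseteq> (\<lambda>q. poly q z) ` Q" unfolding f_def using inQ by auto
    then have "finite (f ` UNIV)" using finQ finite_subset by blast
    then have "f constant_on UNIV" using continuous_finite_range_constant[OF connected_UNIV cf] by auto
    then show ?thesis unfolding f_def constant_on_def by (metis UNIV_I)
  qed
  then show ?thesis using poly_eq_poly_eq_iff by blast
qed


lemma smult_smult_mat: "k \<cdot>\<^sub>m (l \<cdot>\<^sub>m A) = (k * l) \<cdot>\<^sub>m (A :: 'a :: comm_ring mat)"
  by (rule eq_matI) (auto simp: mult.assoc)

lemma det_schur_scalar:
  fixes P Q N :: "'a :: field mat"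
  assumes P: "P \<in> carrier_mat d m" and Q: "Q \<in> carrier_mat m d" and N: "N \<in> carrier_mat m m"
    and a: "a \<noteq> 0"
  shows "det (four_block_mat (a \<cdot>\<^sub>m 1\<^sub>m d) P Q N) = a^d * det (N - (1/a) \<cdot>\<^sub>m (Q * P))"
proof -
  define N' where "N' = N - (1/a) \<cdot>\<^sub>m (Q * P)"
  have N': "N' \<in> carrier_mat m m" unfolding N'_def using P Q N by auto
  define L where "L = four_block_mat (1\<^sub>m d) (0\<^sub>m d m) ((1/a) \<cdot>\<^sub>m Q) (1\<^sub>m m)"
  define U where "U = four_block_mat (a \<cdot>\<^sub>m 1\<^sub>m d) P (0\<^sub>m m d) N'"
  have L: "L \<in> carrier_mat (d+m) (d+m)" unfolding L_def using Q by auto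
  have U: "U \<in> carrier_mat (d+m) (d+m)" unfolding U_def using P N' by auto
  have e1: "(1/a) \<cdot>\<^sub>m Q * (a \<cdot>\<^sub>m 1\<^sub>m d) = Q"
  proof -
    have "(1/a) \<cdot>\<^sub>m Q * (a \<cdot>\<^sub>m 1\<^sub>m d) = (1/a) \<cdot>\<^sub>m (a \<cdot>\<^sub>m (Q * 1\<^sub>m d))"
      using Q by (simp add: mult_smult_assoc_mat[OF _ smult_carrier_mat[OF one_carrier_mat]] mult_smult_distrib[OF Q one_carrier_mat])
    also have "\<dots> = Q" using Q a by (simp add: smult_smult_mat) (rule eq_matI, auto)
    finally show ?thesis .
  qed
  have e2: "(1/a) \<cdot>\<^sub>m Q * P + 1\<^sub>m m * N' = N"
    unfolding N'_def using P Q N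
    by (simp add: mult_smult_assoc_mat) (rule eq_matI, auto)
  have "L * U = four_block_mat (1\<^sub>m d * (a \<cdot>\<^sub>m 1\<^sub>m d) + 0\<^sub>m d m * 0\<^sub>m m d) (1\<^sub>m d * P + 0\<^sub>m d m * N')
     ((1/a) \<cdot>\<^sub>m Q * (a \<cdot>\<^sub>m 1\<^sub>m d) + 1\<^sub>m m * 0\<^sub>m m d) ((1/a) \<cdot>\<^sub>m Q * P + 1\<^sub>m m * N')"
    unfolding L_def U_def using P Q N' by (intro mult_four_block_mat) auto
  also have "\<dots> = four_block_mat (a \<cdot>\<^sub>m 1\<^sub>m d) P Q N"
    using P Q N' e1 e2 by simp
  finally have LU: "L * U = four_block_mat (a \<cdot>\<^sub>m 1\<^sub>m d) P Q N" .
  have dL: "det L = 1" unfolding L_def using Q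
    by (subst det_four_block_mat_upper_right_zero[where n = d and m = m]) auto
  have dU: "det U = a^d * det N'" unfolding U_def using P N'
    by (subst det_four_block_mat_lower_left_zero[where n = d and m = m]) (auto simp: det_smult)
  show ?thesis unfolding LU[symmetric] det_mult[OF L U] dL dU N'_def by simp
qed


lemma adj_four_block:
  assumes "A1 \<in> carrier_mat n1 m1" "A2 \<in> carrier_mat n1 m2" "A3 \<in> carrier_mat n2 m1" "A4 \<in> carrier_mat n2 m2"
  shows "mat_adjoint (four_block_mat A1 A2 A3 A4) =
    four_block_mat (mat_adjoint A1) (mat_adjoint A3) (mat_adjoint A2) (mat_adjoint A4)"
  by (rule eq_matI) (insert assms, auto)

lemma step_defect:
  fixes X B :: "complex mat"
  assumes X: "X \<in> carrier_mat m m" and B: "B \<in> carrier_mat d m"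
    and BB: "mat_adjoint B * B = defect X"
  shows "defect (four_block_mat (0\<^sub>m d d) B (0\<^sub>m m d) X) = four_block_mat (1\<^sub>m d) (0\<^sub>m d m) (0\<^sub>m m d) (0\<^sub>m m m)"
proof -
  let ?A = "four_block_mat (0\<^sub>m d d) B (0\<^sub>m m d) X"
  have adjA: "mat_adjoint ?A = four_block_mat (0\<^sub>m d d) (0\<^sub>m d m) (mat_adjoint B) (mat_adjoint X)"
    unfolding adj_four_block[OF zero_carrier_mat B zero_carrier_mat X] using X B by (auto intro!: eq_matI)
  have "mat_adjoint ?A * ?A = four_block_mat (0\<^sub>m d d * 0\<^sub>m d d + 0\<^sub>m d m * 0\<^sub>m m d) (0\<^sub>m d d * B + 0\<^sub>m d m * X)
       (mat_adjoint B * 0\<^sub>m d d + mat_adjoint X * 0\<^sub>m m d) (mat_adjoint B * B + mat_adjoint X * X)"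
    unfolding adjA using X B by (intro mult_four_block_mat) auto
  also have "\<dots> = four_block_mat (0\<^sub>m d d) (0\<^sub>m d m) (0\<^sub>m m d) (1\<^sub>m m)"
  proof -
    have "mat_adjoint B * B + mat_adjoint X * X = 1\<^sub>m m"
      unfolding BB defect_def using X by (intro eq_matI) auto
    then show ?thesis using X B by simp
  qed
  finally have "mat_adjoint ?A * ?A = four_block_mat (0\<^sub>m d d) (0\<^sub>m d m) (0\<^sub>m m d) (1\<^sub>m m)" .
  then show ?thesis unfolding defect_def using X B by (intro eq_matI) auto
qed


lemma step_charpoly:
  fixes X B :: "complex mat" and s z :: complex
  assumes X: "X \<in> carrier_mat m m" and B: "B \<in> carrier_mat d m"
    and BB: "mat_adjoint B * B = defect X" and zs: "z \<noteq> s"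
  shows "poly (char_poly (herm_part (four_block_mat (0\<^sub>m d d) B (0\<^sub>m m d) X) t + s \<cdot>\<^sub>m defect (four_block_mat (0\<^sub>m d d) B (0\<^sub>m m d) X))) z
     = (z - s)^d * poly (char_poly (herm_part X t + (1 / (4 * (z - s))) \<cdot>\<^sub>m defect X)) z"
proof -
  define A where "A = four_block_mat (0\<^sub>m d d) B (0\<^sub>m m d) X"
  have A: "A \<in> carrier_mat (d+m) (d+m)" unfolding A_def using B X by auto
  have DA: "defect A = four_block_mat (1\<^sub>m d) (0\<^sub>m d m) (0\<^sub>m m d) (0\<^sub>m m m)"
    unfolding A_def by (rule step_defect[OF X B BB])
  define e1 where "e1 = exp (- \<i> * of_real t)"
  define e2 where "e2 = exp (\<i> * of_real t)"
  have e12: "e2 * e1 = 1" unfolding e1_def e2_def by (simp add: exp_add[symmetric])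
  define c1 where "c1 = - (1/2) * e1"
  define c2 where "c2 = - (1/2) * e2"
  define N where "N = - char_matrix (herm_part X t) z"
  have N: "N \<in> carrier_mat m m" unfolding N_def using X by auto
  have M1: "- char_matrix (herm_part A t + s \<cdot>\<^sub>m defect A) z =
     four_block_mat ((z - s) \<cdot>\<^sub>m 1\<^sub>m d) (c1 \<cdot>\<^sub>m B) (c2 \<cdot>\<^sub>m mat_adjoint B) N"
  proof (rule eq_matI)
    show "dim_row (- char_matrix (herm_part A t + s \<cdot>\<^sub>m defect A) z) = dim_row (four_block_mat ((z - s) \<cdot>\<^sub>m 1\<^sub>m d) (c1 \<cdot>\<^sub>m B) (c2 \<cdot>\<^sub>m mat_adjoint B) N)"
      using A B N by (simp add: char_matrix_def DA)
    show "dim_col (- char_matrix (herm_part A t + s \<cdot>\<^sub>m defect A) z) = dim_col (four_block_mat ((z - s) \<cdot>\<^sub>m 1\<^sub>m d) (c1 \<cdot>\<^sub>m B) (c2 \<cdot>\<^sub>m mat_adjoint B) N)"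
      using A B N by (simp add: char_matrix_def DA)
    fix i j assume i: "i < dim_row (four_block_mat ((z - s) \<cdot>\<^sub>m 1\<^sub>m d) (c1 \<cdot>\<^sub>m B) (c2 \<cdot>\<^sub>m mat_adjoint B) N)"
      and j: "j < dim_col (four_block_mat ((z - s) \<cdot>\<^sub>m 1\<^sub>m d) (c1 \<cdot>\<^sub>m B) (c2 \<cdot>\<^sub>m mat_adjoint B) N)"
    have ij: "i < d + m" "j < d + m" using i j B N by auto
    have HA: "herm_part A t $$ (i,j) = (1/2) * (e1 * A $$ (i,j) + e2 * cnj (A $$ (j,i)))"
      using herm_part_index[OF A ij] unfolding e1_def e2_def .
    have HX: "\<And>i j. i < m \<Longrightarrow> j < m \<Longrightarrow> herm_part X t $$ (i,j) = (1/2) * (e1 * X $$ (i,j) + e2 * cnj (X $$ (j,i)))"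
      using herm_part_index[OF X] unfolding e1_def e2_def by auto
    have L: "(- char_matrix (herm_part A t + s \<cdot>\<^sub>m defect A) z) $$ (i,j) =
       - (herm_part A t $$ (i,j) + s * defect A $$ (i,j) - (if i = j then z else 0))"
    proof -
      have "dim_row (defect A) = d + m" "dim_col (defect A) = d + m" using defect_carrier[OF A] by auto
      then show ?thesis using ij A by (simp add: char_matrix_def)
    qed
    have Dij: "defect A $$ (i,j) = (if i < d \<and> j < d \<and> i = j then 1 else 0)"
      unfolding DA using ij by auto
    have Aidx: "\<And>i j. i < d + m \<Longrightarrow> j < d + m \<Longrightarrow> A $$ (i,j) = (if i < d then (if j < d then 0 else B $$ (i, j-d)) else (if j < d then 0 else X $$ (i-d, j-d)))"
      unfolding A_def using B X by auto
    have R: "four_block_mat ((z - s) \<cdot>\<^sub>m 1\<^sub>m d) (c1 \<cdot>\<^sub>m B) (c2 \<cdot>\<^sub>m mat_adjoint B) N $$ (i, j) =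
       (if i < d then (if j < d then (if i = j then z - s else 0) else c1 * B $$ (i, j-d))
        else (if j < d then c2 * cnj (B $$ (j, i-d)) else N $$ (i-d, j-d)))"
      using ij B N by auto
    have Nidx: "\<And>i j. i < m \<Longrightarrow> j < m \<Longrightarrow> N $$ (i,j) = - (herm_part X t $$ (i,j) - (if i = j then z else 0))"
      unfolding N_def using X by (simp add: char_matrix_def)
    show "(- char_matrix (herm_part A t + s \<cdot>\<^sub>m defect A) z) $$ (i, j) =
          four_block_mat ((z - s) \<cdot>\<^sub>m 1\<^sub>m d) (c1 \<cdot>\<^sub>m B) (c2 \<cdot>\<^sub>m mat_adjoint B) N $$ (i, j)"
      unfolding L R HA Dij Aidx[OF ij] Aidx[OF ij(2,1)]
      using ij by (auto simp: Nidx HX c1_def c2_def algebra_simps)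
  qed
  have M2: "N - (1 / (z - s)) \<cdot>\<^sub>m ((c2 \<cdot>\<^sub>m mat_adjoint B) * (c1 \<cdot>\<^sub>m B)) =
      - char_matrix (herm_part X t + (1 / (4 * (z - s))) \<cdot>\<^sub>m defect X) z"
  proof -
    have "(c2 \<cdot>\<^sub>m mat_adjoint B) * (c1 \<cdot>\<^sub>m B) = (c2 * c1) \<cdot>\<^sub>m defect X"
    proof -
      have "(c2 \<cdot>\<^sub>m mat_adjoint B) * (c1 \<cdot>\<^sub>m B) = c2 \<cdot>\<^sub>m (mat_adjoint B * (c1 \<cdot>\<^sub>m B))"
        by (rule mult_smult_assoc_mat[OF adj_carrier[OF B] smult_carrier_mat[OF B]])
      also have "\<dots> = c2 \<cdot>\<^sub>m (c1 \<cdot>\<^sub>m (mat_adjoint B * B))"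
        by (simp add: mult_smult_distrib[OF adj_carrier[OF B] B])
      finally show ?thesis unfolding BB smult_smult_mat .
    qed
    also have "c2 * c1 = 1/4" unfolding c1_def c2_def using e12 by (simp add: algebra_simps)
    finally have "(c2 \<cdot>\<^sub>m mat_adjoint B) * (c1 \<cdot>\<^sub>m B) = (1/4) \<cdot>\<^sub>m defect X" .
    moreover have dX: "dim_row (defect X) = m" "dim_col (defect X) = m" "dim_row (herm_part X t) = m" "dim_col (herm_part X t) = m"
      using carrier_matD[OF defect_carrier[OF X]] carrier_matD[OF herm_part_carrier[OF X]] by auto
    moreover have "1 / (z - s) * (1 / 4) = 1 / (4 * (z - s))" by simp
    ultimately show ?thesis unfolding N_def using X
      by (intro eq_matI) (auto simp: char_matrix_def algebra_simps)
  qed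
  have "poly (char_poly (herm_part A t + s \<cdot>\<^sub>m defect A)) z = det (- char_matrix (herm_part A t + s \<cdot>\<^sub>m defect A) z)"
    by (rule char_poly_matrix[where n = "d+m"]) (use A in auto)
  also have "\<dots> = (z - s)^d * det (N - (1 / (z - s)) \<cdot>\<^sub>m ((c2 \<cdot>\<^sub>m mat_adjoint B) * (c1 \<cdot>\<^sub>m B)))"
    unfolding M1 by (rule det_schur_scalar) (use B N zs in auto)
  also have "\<dots> = (z - s)^d * poly (char_poly (herm_part X t + (1 / (4 * (z - s))) \<cdot>\<^sub>m defect X)) z"
    unfolding M2 by (subst char_poly_matrix[where n = m]) (use X in auto)
  finally show ?thesis unfolding A_def .
qed


lemma adj_inner:
  fixes A :: "complex mat"
  assumes A: "A \<in> carrier_mat n m" and x: "x \<in> carrier_vec n" and y: "y \<in> carrier_vec m"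
  shows "(mat_adjoint A *\<^sub>v x) \<bullet>c y = x \<bullet>c (A *\<^sub>v y)"
proof -
  have "(mat_adjoint A *\<^sub>v x) \<bullet>c y = (\<Sum>j<m. (\<Sum>i<n. cnj (A $$ (i,j)) * x $ i) * cnj (y $ j))"
    using A x y by (auto simp: scalar_prod_def atLeast0LessThan intro!: sum.cong)
  also have "\<dots> = (\<Sum>j<m. \<Sum>i<n. x $ i * cnj (A $$ (i,j) * y $ j))"
    by (simp add: sum_distrib_right sum_distrib_left mult_ac)
  also have "\<dots> = (\<Sum>i<n. \<Sum>j<m. x $ i * cnj (A $$ (i,j) * y $ j))"
    by (rule sum.swap)
  also have "\<dots> = x \<bullet>c (A *\<^sub>v y)"
    using A x y by (auto simp: scalar_prod_def atLeast0LessThan sum_distrib_left cnj_sum intro!: sum.cong)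
  finally show ?thesis .
qed

lemma factor_rank:
  fixes B :: "complex mat"
  assumes B: "B \<in> carrier_mat r n"
    and inj: "\<And>x. x \<in> carrier_vec r \<Longrightarrow> mat_adjoint B *\<^sub>v x = 0\<^sub>v n \<Longrightarrow> x = 0\<^sub>v r"
  shows "mat_rank B = r" "mat_rank (mat_adjoint B * B) = r"
proof -
  have aB: "mat_adjoint B \<in> carrier_mat n r" using B by simp
  define G where "G = B * mat_adjoint B"
  have G: "G \<in> carrier_mat r r" unfolding G_def using B by auto
  have Ginj: "x = 0\<^sub>v r" if x: "x \<in> carrier_vec r" and Gx: "G *\<^sub>v x = 0\<^sub>v r" for x
  proof -
    define y where "y = mat_adjoint B *\<^sub>v x"
    have y: "y \<in> carrier_vec n" unfolding y_def by (rule mult_mat_vec_carrier[OF adj_carrier[OF B] x])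
    have "y \<bullet>c y = x \<bullet>c (B *\<^sub>v y)" unfolding y_def by (rule adj_inner[OF B x]) (use y y_def in auto)
    also have "B *\<^sub>v y = G *\<^sub>v x" unfolding y_def G_def by (rule assoc_mult_mat_vec[OF B aB x, symmetric])
    finally have "y \<bullet>c y = 0" using Gx x by simp
    then have "y = 0\<^sub>v n" using conjugate_square_eq_0_vec[OF y] by simp
    then show ?thesis using inj x y_def by auto
  qed
  have "det G \<noteq> 0"
  proof
    assume "det G = 0"
    then obtain v where "v \<in> carrier_vec r" "v \<noteq> 0\<^sub>v r" "G *\<^sub>v v = 0\<^sub>v r"
      using det_0_iff_vec_prod_zero_field[OF G] by auto
    then show False using Ginj by auto
  qed
  then have "G \<in> Units (ring_mat TYPE(complex) r undefined)" by (rule det_non_zero_imp_unit[OF G])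
  then obtain Gi where Gi: "Gi \<in> carrier_mat r r" "G * Gi = 1\<^sub>m r"
    unfolding Units_def by (auto simp: ring_mat_simps)
  have surj: "\<exists>x \<in> carrier_vec n. B *\<^sub>v x = y" if y: "y \<in> carrier_vec r" for y
  proof
    show "mat_adjoint B *\<^sub>v (Gi *\<^sub>v y) \<in> carrier_vec n" using B Gi y
      by (metis adj_carrier mult_mat_vec_carrier)
    have "B *\<^sub>v (mat_adjoint B *\<^sub>v (Gi *\<^sub>v y)) = G *\<^sub>v (Gi *\<^sub>v y)"
      unfolding G_def using assoc_mult_mat_vec[OF B aB mult_mat_vec_carrier[OF Gi(1) y]] by simp
    also have "\<dots> = (G * Gi) *\<^sub>v y" by (rule assoc_mult_mat_vec[OF G Gi(1) y, symmetric])
    finally show "B *\<^sub>v (mat_adjoint B *\<^sub>v (Gi *\<^sub>v y)) = y" using Gi y by simp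
  qed
  have cs: "vec_space.col_space r B = carrier_vec r"
    unfolding vec_space.col_space_eq[OF B] using B surj by auto
  have mv: "module_vec TYPE(complex) r\<lparr>carrier := carrier_vec r\<rparr> = module_vec TYPE(complex) r"
    by (simp add: module_vec_def)
  have "vec_space.rank r B = vectorspace.dim class_ring (module_vec TYPE(complex) r\<lparr>carrier := vec_space.col_space r B\<rparr>)"
    unfolding vec_space.rank_def vec_space.col_space_def ..
  also have "\<dots> = r" unfolding cs mv by (rule vec_space.dim_is_n)
  finally show "mat_rank B = r" unfolding mat_rank_def using B by simp

  define D where "D = mat_adjoint B * B"
  have D: "D \<in> carrier_mat n n" unfolding D_def using B aB by auto
  have csD: "vec_space.col_space n D = vec_space.col_space n (mat_adjoint B)"
  proof -
    have "{y \<in> carrier_vec n. \<exists>x\<in>carrier_vec n. D *\<^sub>v x = y} = {y \<in> carrier_vec n. \<exists>x\<in>carrier_vec r. mat_adjoint B *\<^sub>v x = y}"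
    proof (intro Collect_cong conj_cong refl iffI)
      fix y assume "\<exists>x\<in>carrier_vec n. D *\<^sub>v x = y"
      then obtain x where x: "x \<in> carrier_vec n" "D *\<^sub>v x = y" by auto
      have "D *\<^sub>v x = mat_adjoint B *\<^sub>v (B *\<^sub>v x)" unfolding D_def by (rule assoc_mult_mat_vec[OF aB B x(1)])
      then show "\<exists>x\<in>carrier_vec r. mat_adjoint B *\<^sub>v x = y" using x B by (metis mult_mat_vec_carrier)
    next
      fix y assume "\<exists>x\<in>carrier_vec r. mat_adjoint B *\<^sub>v x = y"
      then obtain x where x: "x \<in> carrier_vec r" "mat_adjoint B *\<^sub>v x = y" by auto
      define w where "w = mat_adjoint B *\<^sub>v (Gi *\<^sub>v x)"
      have w: "w \<in> carrier_vec n" unfolding w_def using aB Gi x by (metis mult_mat_vec_carrier)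
      have "D *\<^sub>v w = mat_adjoint B *\<^sub>v (B *\<^sub>v w)" unfolding D_def by (rule assoc_mult_mat_vec[OF aB B w])
      also have "B *\<^sub>v w = x" unfolding w_def
      proof -
        have "B *\<^sub>v (mat_adjoint B *\<^sub>v (Gi *\<^sub>v x)) = G *\<^sub>v (Gi *\<^sub>v x)"
          unfolding G_def using assoc_mult_mat_vec[OF B aB mult_mat_vec_carrier[OF Gi(1) x(1)]] by simp
        also have "\<dots> = (G * Gi) *\<^sub>v x" by (rule assoc_mult_mat_vec[OF G Gi(1) x(1), symmetric])
        finally show "B *\<^sub>v (mat_adjoint B *\<^sub>v (Gi *\<^sub>v x)) = x" using Gi x(1) by simp
      qed
      finally show "\<exists>x\<in>carrier_vec n. D *\<^sub>v x = y" using w x by auto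
    qed
    then show ?thesis unfolding vec_space.col_space_eq[OF D] vec_space.col_space_eq[OF aB] using D aB B by simp
  qed
  have colsB: "\<And>i. i < r \<Longrightarrow> col (mat_adjoint B) i = mat_adjoint B *\<^sub>v unit_vec r i"
    using aB by (auto intro!: eq_vecI simp: col_def scalar_prod_def unit_vec_def
      sum.cong[OF refl] if_distrib cong: if_cong)

  have dist: "distinct (cols (mat_adjoint B))"
  proof (rule ccontr)
    assume "\<not> distinct (cols (mat_adjoint B))"
    then obtain i j where ij: "i < r" "j < r" "i \<noteq> j" "cols (mat_adjoint B) ! i = cols (mat_adjoint B) ! j"
      using aB by (auto simp: distinct_conv_nth)
    then have "col (mat_adjoint B) i = col (mat_adjoint B) j" using aB B by (simp add: cols_nth)
    then have eq0: "mat_adjoint B *\<^sub>v (unit_vec r i - unit_vec r j) = 0\<^sub>v n"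
      using colsB[OF ij(1)] colsB[OF ij(2)] aB
      by (simp add: mult_minus_distrib_mat_vec[OF aB unit_vec_carrier unit_vec_carrier])
    have cv: "unit_vec r i - unit_vec r j \<in> (carrier_vec r :: complex Matrix.vec set)" by (rule minus_carrier_vec) auto
    have e: "unit_vec r i - unit_vec r j = (0\<^sub>v r :: complex Matrix.vec)" by (rule inj[OF cv eq0])
    show False using arg_cong[OF e, of "\<lambda>v. v $ i"] ij by simp
  qed
  have indep: "\<not> module.lin_dep class_ring (module_vec TYPE(complex) n) (set (cols (mat_adjoint B)))"
  proof
    assume "module.lin_dep class_ring (module_vec TYPE(complex) n) (set (cols (mat_adjoint B)))"
    from vec_space.lin_depE[OF aB this dist] obtain v where "v \<in> carrier_vec r" "v \<noteq> 0\<^sub>v r" "mat_adjoint B *\<^sub>v v = 0\<^sub>v n"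
      by blast
    then show False using inj by auto
  qed
  have rB: "vec_space.rank n (mat_adjoint B) = r" by (rule vec_space.lin_indpt_full_rank[OF aB dist indep])
  have "vec_space.rank n D = vec_space.rank n (mat_adjoint B)"
    unfolding vec_space.rank_def vec_space.col_space_def[symmetric] csD ..
  then show "mat_rank (mat_adjoint B * B) = r" unfolding mat_rank_def D_def[symmetric] using D rB by simp
qed


definition bf :: "complex mat \<Rightarrow> nat \<Rightarrow> (nat \<Rightarrow> complex) \<Rightarrow> (nat \<Rightarrow> complex) \<Rightarrow> complex" where
  "bf D n f g = (\<Sum>i<n. \<Sum>j<n. cnj (f i) * D $$ (i,j) * g j)"

definition psd :: "complex mat \<Rightarrow> nat \<Rightarrow> bool" where
  "psd D n \<longleftrightarrow> D \<in> carrier_mat n n \<and> (\<forall>i<n. \<forall>j<n. D $$ (j,i) = cnj (D $$ (i,j))) \<and> (\<forall>f. 0 \<le> Re (bf D n f f))"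

lemma bf_add_left: "bf D n (\<lambda>i. f i + g i) h = bf D n f h + bf D n g h"
  by (simp add: bf_def algebra_simps sum.distrib)

lemma bf_add_right: "bf D n h (\<lambda>i. f i + g i) = bf D n h f + bf D n h g"
  by (simp add: bf_def algebra_simps sum.distrib)

lemma bf_smult_left: "bf D n (\<lambda>i. c * f i) h = cnj c * bf D n f h"
  by (simp add: bf_def sum_distrib_left mult_ac)

lemma bf_smult_right: "bf D n h (\<lambda>i. c * f i) = c * bf D n h f"
  by (simp add: bf_def sum_distrib_left mult_ac)



lemma bf_unit_left: "k < n \<Longrightarrow> bf D n (\<lambda>i. if i = k then 1 else 0) h = (\<Sum>j<n. D $$ (k,j) * h j)"
proof -
  assume k: "k < n"
  have "bf D n (\<lambda>i. if i = k then 1 else 0) h = (\<Sum>i<n. if i = k then (\<Sum>j<n. D $$ (i,j) * h j) else 0)"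
    unfolding bf_def by (intro sum.cong refl) auto
  also have "\<dots> = (\<Sum>j<n. D $$ (k,j) * h j)" using k by simp
  finally show ?thesis .
qed

lemma bf_unit_right: "k < n \<Longrightarrow> bf D n f (\<lambda>j. if j = k then 1 else 0) = (\<Sum>i<n. cnj (f i) * D $$ (i,k))"
proof -
  assume k: "k < n"
  have "bf D n f (\<lambda>j. if j = k then 1 else 0) = (\<Sum>i<n. \<Sum>j<n. if j = k then cnj (f i) * D $$ (i,j) else 0)"
    unfolding bf_def by (intro sum.cong refl) auto
  also have "\<dots> = (\<Sum>i<n. cnj (f i) * D $$ (i,k))" using k by simp
  finally show ?thesis .
qed


lemma bf_unit_unit: "k < n \<Longrightarrow> bf D n (\<lambda>i. if i = k then 1 else 0) (\<lambda>i. if i = k then 1 else 0) = D $$ (k,k)"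
proof -
  assume k: "k < n"
  have "(\<Sum>j<n. D $$ (k,j) * (if j = k then 1 else 0)) = (\<Sum>j<n. if j = k then D $$ (k,j) else 0)"
    by (intro sum.cong refl) auto
  then show ?thesis unfolding bf_unit_left[OF k] using k by simp
qed


lemma psdD: assumes "psd D n" shows "D \<in> carrier_mat n n" "\<And>i j. i < n \<Longrightarrow> j < n \<Longrightarrow> D $$ (j,i) = cnj (D $$ (i,j))"
  "\<And>f. 0 \<le> Re (bf D n f f)"
  using assms unfolding psd_def by blast+

lemma psd_diag: assumes "psd D n" "k < n" shows "D $$ (k,k) = complex_of_real (Re (D $$ (k,k)))" "0 \<le> Re (D $$ (k,k))"
proof -
  have "D $$ (k,k) = cnj (D $$ (k,k))" using psdD(2)[OF assms(1) assms(2) assms(2)] .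
  then have "Im (D $$ (k,k)) = 0" by (metis cnj.simps(2) complex_cnj_cancel_iff neg_equal_zero)
  then show "D $$ (k,k) = complex_of_real (Re (D $$ (k,k)))" by (simp add: complex_eq_iff)
  show "0 \<le> Re (D $$ (k,k))" using psdD(3)[OF assms(1), of "\<lambda>i. if i = k then 1 else 0"] unfolding bf_unit_unit[OF assms(2)] .
qed

lemma bf_shift:
  assumes herm: "\<forall>i<n. \<forall>j<n. D $$ (j,i) = cnj (D $$ (i,j))" and k: "k < n"
  shows "bf D n (\<lambda>i. f i + c * (if i = k then 1 else 0)) (\<lambda>i. f i + c * (if i = k then 1 else 0))
    = bf D n f f + c * cnj (\<Sum>j<n. D $$ (k,j) * f j) + cnj c * (\<Sum>j<n. D $$ (k,j) * f j) + cnj c * c * D $$ (k,k)"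
proof -
  let ?e = "\<lambda>i. if i = k then 1 else (0::complex)"
  have s1: "bf D n f ?e = cnj (\<Sum>j<n. D $$ (k,j) * f j)"
  proof -
    have "cnj (f j) * D $$ (j,k) = cnj (D $$ (k,j) * f j)" if j: "j \<in> {..<n}" for j
    proof -
      have "D $$ (j,k) = cnj (D $$ (k,j))" using herm k j by blast
      then show ?thesis by simp
    qed
    then show ?thesis unfolding bf_unit_right[OF k] cnj_sum by (rule sum.cong[OF refl])
  qed
  have "bf D n (\<lambda>i. f i + c * ?e i) (\<lambda>i. f i + c * ?e i) =
     bf D n f f + c * bf D n f ?e + (cnj c * bf D n ?e f + cnj c * (c * bf D n ?e ?e))"
    unfolding bf_add_left bf_add_right bf_smult_left bf_smult_right by simp
  also have "\<dots> = bf D n f f + c * cnj (\<Sum>j<n. D $$ (k,j) * f j) + cnj c * (\<Sum>j<n. D $$ (k,j) * f j) + cnj c * c * D $$ (k,k)"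
    unfolding s1 bf_unit_unit[OF k] bf_unit_left[OF k] by (simp add: algebra_simps)
  finally show ?thesis .
qed


lemma psd_zero_diag:
  assumes psd: "psd D n" and i: "i < n" and j: "j < n" and z: "D $$ (i,i) = 0"
  shows "D $$ (j,i) = 0" "D $$ (i,j) = 0"
proof -
  have herm: "\<forall>i<n. \<forall>j<n. D $$ (j,i) = cnj (D $$ (i,j))" using psdD(2)[OF psd] by blast
  define a where "a = D $$ (j,i)"
  define dj where "dj = Re (D $$ (j,j))"
  have dj0: "0 \<le> dj" unfolding dj_def using psd_diag(2)[OF psd j] .
  have Djj: "D $$ (j,j) = complex_of_real dj" unfolding dj_def using psd_diag(1)[OF psd j] .
  define t where "t = 1 / (dj + 1)"
  have t0: "0 < t" unfolding t_def using dj0 by simp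
  have tdj: "t * dj < 1" unfolding t_def using dj0 by (simp add: field_simps)
  define c where "c = - complex_of_real t * a"
  let ?f = "\<lambda>l. if l = i then 1 else (0::complex)"
  have sa: "(\<Sum>l<n. D $$ (j,l) * ?f l) = a"
  proof -
    have "(\<Sum>l<n. D $$ (j,l) * ?f l) = (\<Sum>l<n. if l = i then D $$ (j,l) else 0)" by (intro sum.cong refl) auto
    then show ?thesis using i unfolding a_def by simp
  qed
  have "0 \<le> Re (bf D n (\<lambda>l. ?f l + c * (if l = j then 1 else 0)) (\<lambda>l. ?f l + c * (if l = j then 1 else 0)))"
    using psdD(3)[OF psd] by blast
  also have "bf D n (\<lambda>l. ?f l + c * (if l = j then 1 else 0)) (\<lambda>l. ?f l + c * (if l = j then 1 else 0))
     = bf D n ?f ?f + c * cnj a + cnj c * a + cnj c * c * D $$ (j,j)"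
    unfolding bf_shift[OF herm j] sa ..
  also have "bf D n ?f ?f = 0" unfolding bf_unit_unit[OF i] z ..
  finally have "0 \<le> Re (c * cnj a + cnj c * a + cnj c * c * D $$ (j,j))" by simp
  also have "c * cnj a + cnj c * a + cnj c * c * D $$ (j,j) = complex_of_real ((cmod a)^2 * (t * t * dj - 2 * t))"
  proof -
    have "c * cnj a + cnj c * a + cnj c * c * D $$ (j,j) = complex_of_real (t * t * dj - 2 * t) * (a * cnj a)"
      unfolding c_def Djj by (simp add: algebra_simps)
    also have "a * cnj a = complex_of_real ((cmod a)^2)" by (rule complex_norm_square[symmetric])
    finally show ?thesis by (simp add: mult.commute)
  qed
  finally have "0 \<le> (cmod a)^2 * (t * t * dj - 2 * t)" by simp
  moreover have "t * t * dj - 2 * t < 0"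
  proof -
    have "t * (t * dj) < t * 2" using t0 tdj by simp
    then show ?thesis by (simp add: algebra_simps)
  qed
  ultimately have "(cmod a)^2 \<le> 0" by (simp add: mult_le_0_iff zero_le_mult_iff)
  then have a0: "a = 0" by simp
  then show "D $$ (j,i) = 0" unfolding a_def .
  have "D $$ (i,j) = cnj (D $$ (j,i))" using herm i j by blast
  then show "D $$ (i,j) = 0" using a0 a_def by simp
qed


lemma adjmult_index:
  fixes A :: "complex mat"
  assumes A: "A \<in> carrier_mat r n" and j: "j < n" and l: "l < n"
  shows "(mat_adjoint A * A) $$ (j,l) = (\<Sum>i<r. cnj (A $$ (i,j)) * A $$ (i,l))"
  using A j l by (auto simp: scalar_prod_def atLeast0LessThan intro!: sum.cong)

lemma adjvec_index:
  fixes A :: "complex mat"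
  assumes A: "A \<in> carrier_mat r n" and x: "x \<in> carrier_vec r" and j: "j < n"
  shows "(mat_adjoint A *\<^sub>v x) $ j = (\<Sum>i<r. cnj (A $$ (i,j)) * x $ i)"
  using A x j by (auto simp: scalar_prod_def atLeast0LessThan intro!: sum.cong)


lemma rank1_update_psd:
  assumes psd: "psd D n" and k: "k < n" and dpos: "0 < Re (D $$ (k,k))"
  defines "u \<equiv> (\<lambda>j. D $$ (j,k) / complex_of_real (sqrt (Re (D $$ (k,k)))))"
  shows "psd (Matrix.mat n n (\<lambda>(i,j). D $$ (i,j) - u i * cnj (u j))) n"
proof -
  define dl where "dl = Re (D $$ (k,k))"
  define sq where "sq = sqrt dl"
  have sq0: "0 < sq" unfolding sq_def dl_def using dpos by simp
  have sqsq: "sq * sq = dl" unfolding sq_def using dpos dl_def by simp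
  have Dkk: "D $$ (k,k) = complex_of_real dl" unfolding dl_def using psd_diag(1)[OF psd k] .
  have u: "u = (\<lambda>j. D $$ (j,k) / complex_of_real sq)" unfolding u_def sq_def dl_def ..
  have herm: "\<forall>i<n. \<forall>j<n. D $$ (j,i) = cnj (D $$ (i,j))" using psdD(2)[OF psd] by blast
  define D' where "D' = Matrix.mat n n (\<lambda>(i,j). D $$ (i,j) - u i * cnj (u j))"
  have D'idx: "\<And>i j. i < n \<Longrightarrow> j < n \<Longrightarrow> D' $$ (i,j) = D $$ (i,j) - u i * cnj (u j)"
    unfolding D'_def by simp
  have "psd D' n" unfolding psd_def
  proof (intro conjI allI impI)
    show "D' \<in> carrier_mat n n" unfolding D'_def by simp
    fix i j assume i: "i < n" and j: "j < n"
    have "D $$ (j,i) = cnj (D $$ (i,j))" using herm i j by blast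
    then show "D' $$ (j,i) = cnj (D' $$ (i,j))" unfolding D'idx[OF i j] D'idx[OF j i] by simp
  next
    fix f :: "nat \<Rightarrow> complex"
    define a where "a = (\<Sum>j<n. D $$ (k,j) * f j)"
    have s2: "(\<Sum>j<n. cnj (u j) * f j) = a / complex_of_real sq"
    proof -
      have "cnj (u j) * f j = D $$ (k,j) * f j / complex_of_real sq" if "j \<in> {..<n}" for j
      proof -
        have "D $$ (k,j) = cnj (D $$ (j,k))" using herm k that by blast
        then show ?thesis unfolding u by simp
      qed
      then show ?thesis unfolding a_def sum_divide_distrib by (rule sum.cong[OF refl])
    qed
    have s1: "(\<Sum>i<n. cnj (f i) * u i) = cnj a / complex_of_real sq"
    proof -
      have "(\<Sum>i<n. cnj (f i) * u i) = cnj (\<Sum>i<n. cnj (u i) * f i)" unfolding cnj_sum by (simp add: mult.commute)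
      then show ?thesis unfolding s2 by simp
    qed
    have "bf D' n f f = (\<Sum>i<n. \<Sum>j<n. cnj (f i) * D $$ (i,j) * f j - (cnj (f i) * u i) * (cnj (u j) * f j))"
      unfolding bf_def by (intro sum.cong refl) (auto simp: D'idx algebra_simps)
    also have "\<dots> = bf D n f f - (\<Sum>i<n. cnj (f i) * u i) * (\<Sum>j<n. cnj (u j) * f j)"
      unfolding bf_def sum_subtractf sum_product ..
    also have "\<dots> = bf D n f f - cnj a * a / complex_of_real dl"
      unfolding s1 s2 sqsq[symmetric] by simp
    also have "\<dots> = bf D n (\<lambda>i. f i + (- a / complex_of_real dl) * (if i = k then 1 else 0)) (\<lambda>i. f i + (- a / complex_of_real dl) * (if i = k then 1 else 0))"
      unfolding bf_shift[OF herm k] a_def[symmetric] Dkk using dpos dl_def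
      by (simp add: field_simps)
    finally show "0 \<le> Re (bf D' n f f)" using psdD(3)[OF psd] by simp
  qed
  then show ?thesis unfolding D'_def .
qed


lemma stack_factor:
  fixes B' :: "complex mat" and u :: "nat \<Rightarrow> complex"
  assumes B': "B' \<in> carrier_mat r n" and k: "k < n" and uk: "u k \<noteq> 0"
    and colk: "\<And>i. i < r \<Longrightarrow> B' $$ (i,k) = 0"
    and inj': "\<And>x. x \<in> carrier_vec r \<Longrightarrow> mat_adjoint B' *\<^sub>v x = 0\<^sub>v n \<Longrightarrow> x = 0\<^sub>v r"
  defines "B \<equiv> Matrix.mat (Suc r) n (\<lambda>(i,j). if i = 0 then cnj (u j) else B' $$ (i - 1, j))"
  shows "B \<in> carrier_mat (Suc r) n"
    "\<And>j l. j < n \<Longrightarrow> l < n \<Longrightarrow> (mat_adjoint B * B) $$ (j,l) = u j * cnj (u l) + (mat_adjoint B' * B') $$ (j,l)"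
    "\<And>x. x \<in> carrier_vec (Suc r) \<Longrightarrow> mat_adjoint B *\<^sub>v x = 0\<^sub>v n \<Longrightarrow> x = 0\<^sub>v (Suc r)"
proof -
  show B: "B \<in> carrier_mat (Suc r) n" unfolding B_def by simp
  have Bidx: "\<And>i j. i < Suc r \<Longrightarrow> j < n \<Longrightarrow> B $$ (i,j) = (if i = 0 then cnj (u j) else B' $$ (i - 1, j))"
    unfolding B_def by simp
  fix j l assume j: "j < n" and l: "l < n"
  show "(mat_adjoint B * B) $$ (j,l) = u j * cnj (u l) + (mat_adjoint B' * B') $$ (j,l)"
    unfolding adjmult_index[OF B j l] adjmult_index[OF B' j l] sum.lessThan_Suc_shift
    using j l by (simp add: Bidx)
next
  have B: "B \<in> carrier_mat (Suc r) n" unfolding B_def by simp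
  have Bidx: "\<And>i j. i < Suc r \<Longrightarrow> j < n \<Longrightarrow> B $$ (i,j) = (if i = 0 then cnj (u j) else B' $$ (i - 1, j))"
    unfolding B_def by simp
  fix x :: "complex Matrix.vec" assume x: "x \<in> carrier_vec (Suc r)" and Bx: "mat_adjoint B *\<^sub>v x = 0\<^sub>v n"
  define x' where "x' = Matrix.vec r (\<lambda>i. x $ Suc i)"
  have x': "x' \<in> carrier_vec r" unfolding x'_def by simp
  have comp: "(mat_adjoint B *\<^sub>v x) $ j = u j * x $ 0 + (mat_adjoint B' *\<^sub>v x') $ j" if j: "j < n" for j
    unfolding adjvec_index[OF B x j] adjvec_index[OF B' x' j] sum.lessThan_Suc_shift
    using j by (simp add: Bidx x'_def)
  have "(mat_adjoint B *\<^sub>v x) $ k = u k * x $ 0"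
    unfolding comp[OF k] adjvec_index[OF B' x' k] using colk by simp
  then have x0: "x $ 0 = 0" using Bx k uk by simp
  have "mat_adjoint B' *\<^sub>v x' = 0\<^sub>v n"
  proof (rule eq_vecI)
    fix j assume "j < dim_vec (0\<^sub>v n :: complex Matrix.vec)"
    then have j: "j < n" by simp
    have "(mat_adjoint B' *\<^sub>v x') $ j = (mat_adjoint B *\<^sub>v x) $ j" using comp[OF j] x0 by simp
    then show "(mat_adjoint B' *\<^sub>v x') $ j = 0\<^sub>v n $ j" using Bx j by simp
  qed (use B' in simp)
  then have x'0: "x' = 0\<^sub>v r" using inj'[OF x'] by simp
  show "x = 0\<^sub>v (Suc r)"
  proof (rule eq_vecI)
    fix i assume "i < dim_vec (0\<^sub>v (Suc r) :: complex Matrix.vec)"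
    then have i: "i < Suc r" by simp
    show "x $ i = 0\<^sub>v (Suc r) $ i"
    proof (cases i)
      case 0 then show ?thesis using x0 by simp
    next
      case (Suc i')
      then have "i' < r" using i by simp
      then have "x' $ i' = 0" using x'0 by simp
      then show ?thesis using Suc i unfolding x'_def by simp
    qed
  qed (use x in simp)
qed


lemma psd_factor_aux:
  "\<forall>D. psd D n \<longrightarrow> card {i. i < n \<and> D $$ (i,i) \<noteq> 0} = K \<longrightarrow>
     (\<exists>r B. B \<in> carrier_mat r n \<and> mat_adjoint B * B = D \<and>
        (\<forall>x \<in> carrier_vec r. mat_adjoint B *\<^sub>v x = 0\<^sub>v n \<longrightarrow> x = 0\<^sub>v r))"
proof (induction K rule: less_induct)
  case (less K)
  show ?case
  proof (intro allI impI)
    fix D assume psd: "psd D n" and cardK: "card {i. i < n \<and> D $$ (i,i) \<noteq> 0} = K"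
    have D: "D \<in> carrier_mat n n" using psdD(1)[OF psd] .
    show "\<exists>r B. B \<in> carrier_mat r n \<and> mat_adjoint B * B = D \<and>
        (\<forall>x \<in> carrier_vec r. mat_adjoint B *\<^sub>v x = 0\<^sub>v n \<longrightarrow> x = 0\<^sub>v r)"
    proof (cases "\<exists>k<n. D $$ (k,k) \<noteq> 0")
      case False
      have D0: "D = 0\<^sub>m n n"
      proof (rule eq_matI)
        fix i j assume "i < dim_row (0\<^sub>m n n :: complex mat)" "j < dim_col (0\<^sub>m n n :: complex mat)"
        then have i: "i < n" and j: "j < n" by auto
        have "D $$ (i,i) = 0" using False i by auto
        then show "D $$ (i,j) = 0\<^sub>m n n $$ (i,j)" using psd_zero_diag(2)[OF psd i j] i j by simp
      qed (use D in auto)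
      show ?thesis
      proof (intro exI conjI ballI impI)
        show "(0\<^sub>m 0 n :: complex mat) \<in> carrier_mat 0 n" by simp
        show "mat_adjoint (0\<^sub>m 0 n) * 0\<^sub>m 0 n = D" unfolding D0
          by (rule eq_matI) (auto simp: scalar_prod_def)
        fix x :: "complex Matrix.vec" assume "x \<in> carrier_vec 0" then show "x = 0\<^sub>v 0" by (intro eq_vecI) auto
      qed
    next
      case True
      then obtain k where k: "k < n" "D $$ (k,k) \<noteq> 0" by auto
      define dl where "dl = Re (D $$ (k,k))"
      have Dkk: "D $$ (k,k) = complex_of_real dl" unfolding dl_def using psd_diag(1)[OF psd k(1)] .
      have dpos: "0 < dl" using psd_diag(2)[OF psd k(1)] Dkk k(2) unfolding dl_def[symmetric] by fastforce
      define sq where "sq = sqrt dl"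
      have sq0: "0 < sq" unfolding sq_def using dpos by simp
      have sqsq: "sq * sq = dl" unfolding sq_def using dpos by simp
      define u where "u = (\<lambda>j. D $$ (j,k) / complex_of_real (sqrt (Re (D $$ (k,k)))))"
      have u: "u = (\<lambda>j. D $$ (j,k) / complex_of_real sq)" unfolding u_def sq_def dl_def ..
      define D' where "D' = Matrix.mat n n (\<lambda>(i,j). D $$ (i,j) - u i * cnj (u j))"
      have psd': "psd D' n" unfolding D'_def u_def by (rule rank1_update_psd[OF psd k(1)]) (use dpos dl_def in simp)
      have D'idx: "\<And>i j. i < n \<Longrightarrow> j < n \<Longrightarrow> D' $$ (i,j) = D $$ (i,j) - u i * cnj (u j)"
        unfolding D'_def by simp
      have uk: "u k = complex_of_real sq"
      proof -
        have "u k = complex_of_real (dl / sq)" unfolding u Dkk by simp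
        also have "dl / sq = sq" using sqsq sq0 by (simp add: field_simps)
        finally show ?thesis .
      qed
      have D'kk: "D' $$ (k,k) = 0" unfolding D'idx[OF k(1) k(1)] uk Dkk
        using sqsq by (simp flip: of_real_mult)
      have sub: "{i. i < n \<and> D' $$ (i,i) \<noteq> 0} \<subseteq> {i. i < n \<and> D $$ (i,i) \<noteq> 0} - {k}"
      proof
        fix i assume "i \<in> {i. i < n \<and> D' $$ (i,i) \<noteq> 0}"
        then have i: "i < n" and nz: "D' $$ (i,i) \<noteq> 0" by auto
        have "i \<noteq> k" using nz D'kk by auto
        moreover have "D $$ (i,i) \<noteq> 0"
        proof
          assume z: "D $$ (i,i) = 0"
          then have "D $$ (i,k) = 0" using psd_zero_diag(2)[OF psd i k(1) z] by simp
          then have "u i = 0" unfolding u by simp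
          then show False using nz z D'idx[OF i i] by simp
        qed
        ultimately show "i \<in> {i. i < n \<and> D $$ (i,i) \<noteq> 0} - {k}" using i by auto
      qed
      have "card {i. i < n \<and> D' $$ (i,i) \<noteq> 0} \<le> card ({i. i < n \<and> D $$ (i,i) \<noteq> 0} - {k})"
        by (rule card_mono[OF _ sub]) auto
      also have "\<dots> < card {i. i < n \<and> D $$ (i,i) \<noteq> 0}"
        by (rule card_Diff1_less) (use k in auto)
      finally have lt: "card {i. i < n \<and> D' $$ (i,i) \<noteq> 0} < K" using cardK by simp
      obtain r B' where B': "B' \<in> carrier_mat r n" and BB': "mat_adjoint B' * B' = D'"
        and inj': "\<forall>x \<in> carrier_vec r. mat_adjoint B' *\<^sub>v x = 0\<^sub>v n \<longrightarrow> x = 0\<^sub>v r"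
        using less[OF lt] psd' by blast
      have colk: "B' $$ (i,k) = 0" if i: "i < r" for i
      proof -
        have "(\<Sum>i<r. cnj (B' $$ (i,k)) * B' $$ (i,k)) = 0"
          using adjmult_index[OF B' k(1) k(1)] BB' D'kk by simp
        moreover have e: "\<And>z::complex. cnj z * z = complex_of_real ((cmod z)^2)"
          by (metis complex_norm_square mult.commute)
        ultimately have "(\<Sum>i<r. complex_of_real ((cmod (B' $$ (i,k)))^2)) = 0"
          by simp
        then have "(\<Sum>i<r. (cmod (B' $$ (i,k)))^2) = 0"
          by (metis of_real_0 of_real_eq_iff of_real_sum)
        then have "\<forall>i\<in>{..<r}. (cmod (B' $$ (i,k)))^2 = 0"
          by (subst sum_nonneg_eq_0_iff[symmetric]) auto
        then show ?thesis using i by simp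
      qed
      define B where "B = Matrix.mat (Suc r) n (\<lambda>(i,j). if i = 0 then cnj (u j) else B' $$ (i - 1, j))"
      have ukn: "u k \<noteq> 0" using uk sq0 by simp
      have colk': "\<And>i. i < r \<Longrightarrow> B' $$ (i,k) = 0" using colk by blast
      have SF1: "B \<in> carrier_mat (Suc r) n" unfolding B_def by simp
      have SF2: "(mat_adjoint B * B) $$ (j,l) = u j * cnj (u l) + (mat_adjoint B' * B') $$ (j,l)"
        if "j < n" "l < n" for j l
        unfolding B_def by (rule stack_factor(2)[where u = u, OF B' k(1) ukn]) (use colk' inj' that in auto)
      have SF3: "x = 0\<^sub>v (Suc r)" if "x \<in> carrier_vec (Suc r)" "mat_adjoint B *\<^sub>v x = 0\<^sub>v n" for x
        using that unfolding B_def by (intro stack_factor(3)[where u = u, OF B' k(1) ukn]) (use colk' inj' that in auto)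
      note SF = SF1 SF2 SF3
      show ?thesis
      proof (intro exI conjI ballI impI)
        show "B \<in> carrier_mat (Suc r) n" by (rule SF(1))
        show "mat_adjoint B * B = D"
        proof (rule eq_matI)
          fix j l assume "j < dim_row D" "l < dim_col D"
          then have j: "j < n" and l: "l < n" using D by auto
          show "(mat_adjoint B * B) $$ (j,l) = D $$ (j,l)"
            using SF(2)[OF j l] BB' D'idx[OF j l] by auto
        qed (use D SF(1) in auto)
        fix x :: "complex Matrix.vec" assume "x \<in> carrier_vec (Suc r)" "mat_adjoint B *\<^sub>v x = 0\<^sub>v n"
        then show "x = 0\<^sub>v (Suc r)" using SF(3) by auto
      qed
    qed
  qed
qed

lemma psd_factor:
  assumes "psd D n"
  shows "\<exists>r B. B \<in> carrier_mat r n \<and> mat_adjoint B * B = D \<and>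
        (\<forall>x \<in> carrier_vec r. mat_adjoint B *\<^sub>v x = 0\<^sub>v n \<longrightarrow> x = 0\<^sub>v r)"
  using psd_factor_aux assms by blast


lemma bf_adjmult:
  fixes A :: "complex mat"
  assumes A: "A \<in> carrier_mat r n"
  shows "bf (mat_adjoint A * A) n f f = (A *\<^sub>v Matrix.vec n f) \<bullet>c (A *\<^sub>v Matrix.vec n f)"
proof -
  have "bf (mat_adjoint A * A) n f f = (\<Sum>j<n. \<Sum>l<n. cnj (f j) * (\<Sum>i<r. cnj (A $$ (i,j)) * A $$ (i,l)) * f l)"
    unfolding bf_def by (intro sum.cong refl) (simp add: adjmult_index[OF A])
  also have "\<dots> = (\<Sum>j<n. \<Sum>l<n. \<Sum>i<r. cnj (A $$ (i,j) * f j) * (A $$ (i,l) * f l))"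
    by (simp add: sum_distrib_left sum_distrib_right mult_ac)
  also have "\<dots> = (\<Sum>i<r. \<Sum>j<n. \<Sum>l<n. cnj (A $$ (i,j) * f j) * (A $$ (i,l) * f l))"
    by (simp add: sum.swap[of _ "{..<r}"])
  also have "\<dots> = (\<Sum>i<r. (\<Sum>l<n. A $$ (i,l) * f l) * cnj (\<Sum>j<n. A $$ (i,j) * f j))"
    by (simp add: sum_distrib_left sum_distrib_right cnj_sum mult_ac)
  also have "\<dots> = (A *\<^sub>v Matrix.vec n f) \<bullet>c (A *\<^sub>v Matrix.vec n f)"
    using A by (auto simp: scalar_prod_def atLeast0LessThan intro!: sum.cong)
  finally show ?thesis .
qed

lemma bf_one: "bf (1\<^sub>m n) n f f = Matrix.vec n f \<bullet>c Matrix.vec n f"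
proof -
  have "bf (1\<^sub>m n) n f f = (\<Sum>i<n. \<Sum>j<n. if i = j then cnj (f i) * f j else 0)"
    unfolding bf_def by (intro sum.cong refl) auto
  also have "\<dots> = (\<Sum>i<n. cnj (f i) * f i)" by simp
  also have "\<dots> = Matrix.vec n f \<bullet>c Matrix.vec n f"
    by (auto simp: scalar_prod_def atLeast0LessThan mult.commute intro!: sum.cong)
  finally show ?thesis .
qed

lemma bf_minus:
  assumes "D1 \<in> carrier_mat n n" "D2 \<in> carrier_mat n n"
  shows "bf (D1 - D2) n f g = bf D1 n f g - bf D2 n f g"
  unfolding bf_def using assms by (simp add: sum_subtractf[symmetric] algebra_simps)

lemma Re_sq_nonneg: "0 \<le> Re (v \<bullet>c (v :: complex Matrix.vec))"
  using conjugate_square_ge_0_vec[of v] by (simp add: less_eq_complex_def)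

lemma contraction_psd:
  fixes X :: "complex mat"
  assumes X: "X \<in> carrier_mat m m" and c: "contraction X"
  shows "psd (defect X) m"
  unfolding psd_def
proof (intro conjI allI impI)
  show "defect X \<in> carrier_mat m m" using X by simp
  fix i j assume i: "i < m" and j: "j < m"
  have di: "defect X $$ (a,b) = (if a = b then 1 else 0) - (\<Sum>k<m. cnj (X $$ (k,a)) * X $$ (k,b))"
    if "a < m" "b < m" for a b
  proof -
    have "defect X $$ (a,b) = 1\<^sub>m m $$ (a,b) - (mat_adjoint X * X) $$ (a,b)"
      unfolding defect_def using X that by simp
    then show ?thesis unfolding adjmult_index[OF X that] using that by simp
  qed
  show "defect X $$ (j,i) = cnj (defect X $$ (i,j))"
    unfolding di[OF i j] di[OF j i] by (simp add: cnj_sum mult.commute)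
next
  fix f :: "nat \<Rightarrow> complex"
  let ?v = "Matrix.vec m f"
  have v: "?v \<in> carrier_vec (dim_col X)" using X by simp
  have "bf (defect X) m f f = ?v \<bullet>c ?v - (X *\<^sub>v ?v) \<bullet>c (X *\<^sub>v ?v)"
  proof -
    have "mat_adjoint X * X \<in> carrier_mat m m" by (rule mult_carrier_mat[OF adj_carrier[OF X] X])
    then have "bf (1\<^sub>m m - mat_adjoint X * X) m f f = bf (1\<^sub>m m) m f f - bf (mat_adjoint X * X) m f f"
      by (intro bf_minus) auto
    then show ?thesis unfolding defect_def using X by (simp add: bf_one bf_adjmult[OF X])
  qed
  then show "0 \<le> Re (bf (defect X) m f f)" using c v unfolding contraction_def by simp
qed


lemma defect_factor_ok:
  fixes X :: "complex mat"
  assumes X: "X \<in> carrier_mat m m" and c: "contraction X"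
  shows "is_defect_factor X (defect_factor X)"
proof -
  obtain r B where B: "B \<in> carrier_mat r m" and BB: "mat_adjoint B * B = defect X"
    and inj: "\<forall>x \<in> carrier_vec r. mat_adjoint B *\<^sub>v x = 0\<^sub>v m \<longrightarrow> x = 0\<^sub>v r"
    using psd_factor[OF contraction_psd[OF X c]] by blast
  have inj': "\<And>x. x \<in> carrier_vec r \<Longrightarrow> mat_adjoint B *\<^sub>v x = 0\<^sub>v m \<Longrightarrow> x = 0\<^sub>v r" using inj by blast
  have r1: "mat_rank B = r" and r2: "mat_rank (mat_adjoint B * B) = r" using factor_rank[OF B inj'] by auto
  have "is_defect_factor X B" unfolding is_defect_factor_def
    using B BB r1 r2 X by auto
  then show ?thesis unfolding defect_factor_def by (rule someI)
qed

lemma step_contraction: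
  fixes X B :: "complex mat"
  assumes X: "X \<in> carrier_mat m m" and B: "B \<in> carrier_mat d m"
    and BB: "mat_adjoint B * B = defect X"
  shows "contraction (four_block_mat (0\<^sub>m d d) B (0\<^sub>m m d) X)"
proof -
  define A where "A = four_block_mat (0\<^sub>m d d) B (0\<^sub>m m d) X"
  have A: "A \<in> carrier_mat (d+m) (d+m)" unfolding A_def using B X by auto
  have DA: "defect A = four_block_mat (1\<^sub>m d) (0\<^sub>m d m) (0\<^sub>m m d) (0\<^sub>m m m)"
    unfolding A_def by (rule step_defect[OF X B BB])
  define E where "E = Matrix.mat d (d+m) (\<lambda>(i,j). if i = j then (1::complex) else 0)"
  have E: "E \<in> carrier_mat d (d+m)" unfolding E_def by simp
  have EE: "mat_adjoint E * E = defect A"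
  proof (rule eq_matI)
    fix j l assume "j < dim_row (defect A)" "l < dim_col (defect A)"
    then have j: "j < d + m" and l: "l < d + m" unfolding DA by auto
    have "(\<Sum>i<d. cnj (E $$ (i,j)) * E $$ (i,l)) = (\<Sum>i<d. if i = j \<and> i = l then 1 else 0)"
      using j l unfolding E_def by (intro sum.cong refl) auto
    also have "\<dots> = (if j < d \<and> j = l then 1 else 0)"
      by (cases "j = l") (auto simp: sum.delta)
    finally show "(mat_adjoint E * E) $$ (j,l) = defect A $$ (j,l)"
      unfolding adjmult_index[OF E j l] DA using j l by auto
  qed (use E DA in auto)
  have AA: "mat_adjoint A * A = 1\<^sub>m (d+m) - defect A"
    unfolding defect_def using A by (intro eq_matI) auto
  show ?thesis unfolding A_def[symmetric] contraction_def
  proof (intro conjI ballI)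
    show "square_mat A" using A by simp
    fix v :: "complex Matrix.vec" assume v: "v \<in> carrier_vec (dim_col A)"
    then have v': "v \<in> carrier_vec (d+m)" using A by simp
    define f where "f = (\<lambda>i. v $ i)"
    have vf: "Matrix.vec (d+m) f = v" unfolding f_def using v' by (intro eq_vecI) auto
    have "(A *\<^sub>v v) \<bullet>c (A *\<^sub>v v) = bf (mat_adjoint A * A) (d+m) f f"
      using bf_adjmult[OF A, of f] vf by simp
    also have "\<dots> = bf (1\<^sub>m (d+m)) (d+m) f f - bf (defect A) (d+m) f f"
      unfolding AA by (rule bf_minus) (use A in auto)
    also have "bf (defect A) (d+m) f f = (E *\<^sub>v v) \<bullet>c (E *\<^sub>v v)"
      using bf_adjmult[OF E, of f] vf EE by simp
    also have "bf (1\<^sub>m (d+m)) (d+m) f f = v \<bullet>c v" using bf_one[of "d+m" f] vf by simp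
    finally show "Re ((A *\<^sub>v v) \<bullet>c (A *\<^sub>v v)) \<le> Re (v \<bullet>c v)"
      using Re_sq_nonneg[of "E *\<^sub>v v"] by simp
  qed
qed


definition cpf :: "complex mat \<Rightarrow> real \<Rightarrow> complex \<Rightarrow> complex \<Rightarrow> complex" where
  "cpf Y t s z = poly (char_poly (herm_part Y t + s \<cdot>\<^sub>m defect Y)) z"

lemma tower_Suc: "tower C (Suc j) = tower_step (tower C j)"
  by (simp add: tower_def)

lemma tower_0: "tower C 0 = C"
  by (simp add: tower_def)

lemma tower_step_facts:
  fixes X :: "complex mat"
  assumes X: "X \<in> carrier_mat m m" and c: "contraction X"
  shows "\<exists>d. tower_step X \<in> carrier_mat (d+m) (d+m) \<and> contraction (tower_step X) \<and>
     (\<forall>t s z. z \<noteq> s \<longrightarrow> cpf (tower_step X) t s z = (z - s)^d * cpf X t (1 / (4 * (z - s))) z)"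
proof -
  define B where "B = defect_factor X"
  have "is_defect_factor X B" unfolding B_def by (rule defect_factor_ok[OF X c])
  then have B: "B \<in> carrier_mat (mat_rank (defect X)) m" and BB: "mat_adjoint B * B = defect X"
    unfolding is_defect_factor_def using X by auto
  define d where "d = mat_rank (defect X)"
  have B': "B \<in> carrier_mat d m" using B d_def by simp
  have TS: "tower_step X = four_block_mat (0\<^sub>m d d) B (0\<^sub>m m d) X"
    unfolding tower_step_def Let_def B_def[symmetric] using B' X by auto
  show ?thesis
  proof (intro exI conjI allI impI)
    show "tower_step X \<in> carrier_mat (d+m) (d+m)" unfolding TS using B' X by auto
    show "contraction (tower_step X)" unfolding TS by (rule step_contraction[OF X B' BB])
    fix t :: real and s z :: complex assume zs: "z \<noteq> s"
    show "cpf (tower_step X) t s z = (z - s)^d * cpf X t (1 / (4 * (z - s))) z"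
      unfolding cpf_def TS by (rule step_charpoly[OF X B' BB zs])
  qed
qed

lemma tower_facts:
  fixes C :: "complex mat"
  assumes C: "C \<in> carrier_mat n n" and c: "contraction C"
  shows "\<exists>m. tower C j \<in> carrier_mat m m \<and> contraction (tower C j)"
proof (induction j)
  case 0 then show ?case using C c by (auto simp: tower_0)
next
  case (Suc j)
  then obtain m where "tower C j \<in> carrier_mat m m" "contraction (tower C j)" by auto
  from tower_step_facts[OF this] show ?case unfolding tower_Suc by blast
qed

lemma tower_rel:
  fixes C :: "complex mat"
  assumes C: "C \<in> carrier_mat n n" and c: "contraction C"
  shows "\<exists>d. \<forall>t s z. z \<noteq> s \<longrightarrow> cpf (tower C (Suc j)) t s z = (z - s)^d * cpf (tower C j) t (1 / (4 * (z - s))) z"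
proof -
  obtain m where "tower C j \<in> carrier_mat m m" "contraction (tower C j)" using tower_facts[OF C c] by blast
  from tower_step_facts[OF this] show ?thesis unfolding tower_Suc by blast
qed


lemma poly_eq_on_infinite:
  fixes p q :: "complex poly"
  assumes S: "infinite S" and eq: "\<And>x. x \<in> S \<Longrightarrow> poly p x = poly q x"
  shows "p = q"
proof (rule ccontr)
  assume "p \<noteq> q"
  then have "p - q \<noteq> 0" by simp
  then have "finite {x. poly (p - q) x = 0}" by (rule poly_roots_finite)
  moreover have "S \<subseteq> {x. poly (p - q) x = 0}" using eq by auto
  ultimately show False using S finite_subset by blast
qed

lemma cpf_poly_param:
  fixes Y :: "complex mat"
  assumes Y: "Y \<in> carrier_mat m m"
  shows "\<exists>p. \<forall>s. cpf Y t s z = poly p s"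
proof -
  define H where "H = herm_part Y t"
  define D where "D = defect Y"
  have H: "H \<in> carrier_mat m m" and D: "D \<in> carrier_mat m m" unfolding H_def D_def using Y by auto
  define P where "P = Matrix.mat m m (\<lambda>(i,j). [: - (H $$ (i,j)) + (if i = j then z else 0), - D $$ (i,j) :])"
  have P: "P \<in> carrier_mat m m" unfolding P_def by simp
  have "cpf Y t s z = poly (det P) s" for s
  proof -
    have "cpf Y t s z = det (- char_matrix (H + s \<cdot>\<^sub>m D) z)"
      unfolding cpf_def H_def D_def by (rule char_poly_matrix[where n = m]) (use Y in auto)
    also have "\<dots> = poly (det P) s"
    proof (rule poly_det_cong[symmetric, OF _ P])
      show "- char_matrix (H + s \<cdot>\<^sub>m D) z \<in> carrier_mat m m" using H D by auto
      fix i j assume "i < m" "j < m"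
      then show "poly (P $$ (i,j)) s = (- char_matrix (H + s \<cdot>\<^sub>m D) z) $$ (i,j)"
        unfolding P_def char_matrix_def using H D by (auto simp: algebra_simps)
    qed
    finally show ?thesis .
  qed
  then show ?thesis by blast
qed

lemma spec_cpf:
  fixes Y :: "complex mat"
  assumes Y: "Y \<in> carrier_mat m m"
  shows "spectrum (herm_part Y t + s \<cdot>\<^sub>m defect Y) = {z. cpf Y t s z = 0}"
  unfolding cpf_def by (rule spectrum_root_char_poly[where n = m]) (use Y in auto)

lemma herm_plus_zero:
  fixes Y :: "complex mat"
  assumes Y: "Y \<in> carrier_mat m m"
  shows "herm_part Y t + 0 \<cdot>\<^sub>m defect Y = herm_part Y t"
  by (rule eq_matI) (use Y in auto)

lemma pencil_const:
  fixes Y :: "complex mat"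
  assumes Y: "Y \<in> carrier_mat m m"
    and sp: "\<And>t t'. spectrum (herm_part Y t + c \<cdot>\<^sub>m defect Y) = spectrum (herm_part Y t' + c \<cdot>\<^sub>m defect Y)"
  shows "cpf Y t c z = cpf Y 0 c z"
proof -
  have "char_poly (herm_part Y t + c \<cdot>\<^sub>m defect Y) = char_poly (herm_part Y 0 + c \<cdot>\<^sub>m defect Y)"
  proof (rule spectrum_const_imp_charpoly_const[where M = "\<lambda>t. herm_part Y t + c \<cdot>\<^sub>m defect Y" and n = m])
    show "herm_part Y t + c \<cdot>\<^sub>m defect Y \<in> carrier_mat m m" for t using Y by auto
    show "spectrum (herm_part Y t + c \<cdot>\<^sub>m defect Y) = spectrum (herm_part Y 0 + c \<cdot>\<^sub>m defect Y)" for t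
      by (rule sp)
    fix i j assume i: "i < m" and j: "j < m"
    have "(herm_part Y t + c \<cdot>\<^sub>m defect Y) $$ (i,j) =
      (1/2) * (exp (- \<i> * of_real t) * Y $$ (i,j) + exp (\<i> * of_real t) * cnj (Y $$ (j,i))) + c * defect Y $$ (i,j)" for t
      using herm_part_index[OF Y i j] Y i j by simp
    then have eq: "(\<lambda>t. (herm_part Y t + c \<cdot>\<^sub>m defect Y) $$ (i,j)) =
      (\<lambda>t. (1/2) * (exp (- \<i> * of_real t) * Y $$ (i,j) + exp (\<i> * of_real t) * cnj (Y $$ (j,i))) + c * defect Y $$ (i,j))"
      by auto
    show "continuous_on UNIV (\<lambda>t. (herm_part Y t + c \<cdot>\<^sub>m defect Y) $$ (i,j))"
      unfolding eq by (intro continuous_intros)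
  qed
  then show ?thesis unfolding cpf_def by simp
qed


lemma cpf_param_eq:
  fixes Y :: "complex mat"
  assumes Y: "Y \<in> carrier_mat m m" and S: "infinite S"
    and eq: "\<And>s. s \<in> S \<Longrightarrow> cpf Y t s z = cpf Y t' s z"
  shows "cpf Y t s z = cpf Y t' s z"
proof -
  obtain p where p: "\<And>s. cpf Y t s z = poly p s" using cpf_poly_param[OF Y] by blast
  obtain q where q: "\<And>s. cpf Y t' s z = poly q s" using cpf_poly_param[OF Y] by blast
  have "p = q" by (rule poly_eq_on_infinite[OF S]) (use eq p q in auto)
  then show ?thesis using p q by simp
qed

lemma cpf_z_eq:
  fixes Y :: "complex mat"
  assumes S: "infinite S" and eq: "\<And>z. z \<in> S \<Longrightarrow> cpf Y t s z = cpf Y t' s z"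
  shows "cpf Y t s z = cpf Y t' s z"
proof -
  have "char_poly (herm_part Y t + s \<cdot>\<^sub>m defect Y) = char_poly (herm_part Y t' + s \<cdot>\<^sub>m defect Y)"
    by (rule poly_eq_on_infinite[OF S]) (use eq in \<open>auto simp: cpf_def\<close>)
  then show ?thesis unfolding cpf_def by simp
qed

lemma infinite_minus_point: "infinite (UNIV - {s :: complex})"
  using infinite_UNIV_char_0 by auto

lemma pencil_to_tower:
  fixes C :: "complex mat"
  assumes C: "C \<in> carrier_mat n n" and c: "contraction C"
    and base: "\<And>t s z. cpf C t s z = cpf C 0 s z"
  shows "cpf (tower C j) t s z = cpf (tower C j) 0 s z"
proof (induction j arbitrary: t s z)
  case 0 then show ?case using base by (simp add: tower_0)
next
  case (Suc j)
  obtain d where d: "\<And>t s z. z \<noteq> s \<Longrightarrow> cpf (tower C (Suc j)) t s z = (z - s)^d * cpf (tower C j) t (1 / (4 * (z - s))) z"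
    using tower_rel[OF C c, of j] by blast
  show ?case
  proof (rule cpf_z_eq[OF infinite_minus_point[of s]])
    fix z assume "z \<in> UNIV - {s}"
    then have zs: "z \<noteq> s" by simp
    show "cpf (tower C (Suc j)) t s z = cpf (tower C (Suc j)) 0 s z"
      unfolding d[OF zs] using Suc.IH by simp
  qed
qed

lemma tower_to_pencil:
  fixes C :: "complex mat"
  assumes C: "C \<in> carrier_mat n n" and c: "contraction C"
    and c0: "\<And>j t z. cpf (tower C j) t 0 z = cpf (tower C j) 0 0 z"
  shows "cpf C t s z = cpf C 0 s z"
proof -
  have main: "cpf C t s (complex_of_real (real k + 1)) = cpf C 0 s (complex_of_real (real k + 1))" for k :: nat
  proof -
    define x where "x = real k + 1"
    have x1: "1 \<le> x" unfolding x_def by simp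
    define sk where "sk = rec_nat 0 (\<lambda>_ y. 1 / (4 * (x - y)))"
    have sk0: "sk 0 = 0" unfolding sk_def by simp
    have skS: "sk (Suc i) = 1 / (4 * (x - sk i))" for i unfolding sk_def by simp
    have bnd: "0 \<le> sk i \<and> sk i < 1/2" for i
    proof (induction i)
      case 0 then show ?case using sk0 by simp
    next
      case (Suc i)
      then have "2 < 4 * (x - sk i)" using x1 by simp
      then show ?case unfolding skS by (simp add: field_simps)
    qed
    have mono: "sk i < sk (Suc i)" for i
    proof (induction i)
      case 0 then show ?case unfolding skS sk0 using x1 by simp
    next
      case (Suc i)
      have "x - sk (Suc i) < x - sk i" using Suc by simp
      moreover have "0 < x - sk (Suc i)" using bnd[of "Suc i"] x1 by simp
      ultimately have lt: "4 * (x - sk (Suc i)) < 4 * (x - sk i)" by simp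
      have a: "0 < 4 * (x - sk (Suc i))" using \<open>0 < x - sk (Suc i)\<close> by simp
      have "1 / (4 * (x - sk i)) < 1 / (4 * (x - sk (Suc i)))"
        by (rule divide_strict_left_mono[OF lt]) (use a lt in auto)
      moreover have "sk (Suc (Suc i)) = 1 / (4 * (x - sk (Suc i)))" by (rule skS)
      moreover have "sk (Suc i) = 1 / (4 * (x - sk i))" by (rule skS)
      ultimately show ?case by linarith
    qed
    have smono: "strict_mono sk" using mono by (simp add: strict_mono_Suc_iff)
    have claim: "cpf (tower C j) t (complex_of_real (sk i)) (complex_of_real x) = cpf (tower C j) 0 (complex_of_real (sk i)) (complex_of_real x)"
      for i j
    proof (induction i arbitrary: j)
      case 0 then show ?case using c0 sk0 by simp
    next
      case (Suc i)
      obtain d where d: "\<And>t s z. z \<noteq> s \<Longrightarrow> cpf (tower C (Suc j)) t s z = (z - s)^d * cpf (tower C j) t (1 / (4 * (z - s))) z"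
        using tower_rel[OF C c, of j] by blast
      have ne: "complex_of_real x \<noteq> complex_of_real (sk i)" using bnd[of i] x1 by auto
      have ne': "(complex_of_real x - complex_of_real (sk i))^d \<noteq> 0" using ne by simp
      have eqs: "1 / (4 * (complex_of_real x - complex_of_real (sk i))) = complex_of_real (sk (Suc i))"
        unfolding skS by simp
      have L: "cpf (tower C (Suc j)) t (complex_of_real (sk i)) (complex_of_real x) =
          (complex_of_real x - complex_of_real (sk i))^d * cpf (tower C j) t (complex_of_real (sk (Suc i))) (complex_of_real x)"
        using d[OF ne, of t] unfolding eqs .
      have R: "cpf (tower C (Suc j)) 0 (complex_of_real (sk i)) (complex_of_real x) =
          (complex_of_real x - complex_of_real (sk i))^d * cpf (tower C j) 0 (complex_of_real (sk (Suc i))) (complex_of_real x)"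
        using d[OF ne, of 0] unfolding eqs .
      have "(complex_of_real x - complex_of_real (sk i))^d * cpf (tower C j) t (complex_of_real (sk (Suc i))) (complex_of_real x)
          = (complex_of_real x - complex_of_real (sk i))^d * cpf (tower C j) 0 (complex_of_real (sk (Suc i))) (complex_of_real x)"
        unfolding L[symmetric] R[symmetric] by (rule Suc.IH)
      then show ?case using ne' by (metis mult_left_cancel)
    qed
    have inf: "infinite (range (\<lambda>i. complex_of_real (sk i)))"
    proof (rule range_inj_infinite)
      show "inj (\<lambda>i. complex_of_real (sk i))"
        using strict_mono_imp_inj_on[OF smono] by (auto simp: inj_on_def)
    qed
    have "cpf C t s (complex_of_real x) = cpf C 0 s (complex_of_real x)"
      by (rule cpf_param_eq[OF C inf]) (use claim[where j = 0] in \<open>auto simp: tower_0\<close>)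
    then show ?thesis unfolding x_def .
  qed
  have inf: "infinite (range (\<lambda>k::nat. complex_of_real (real k + 1)))"
    by (rule range_inj_infinite) (auto simp: inj_on_def)
  show ?thesis by (rule cpf_z_eq[OF inf]) (use main in auto)
qed

theorem mainTheorem4:
  fixes C :: "complex mat" and n :: nat
  assumes "C \<in> carrier_mat n n"
    and "contraction C"
  shows "(\<forall>j. circularity (tower C j)) \<longleftrightarrow> defect_pencil_circularity C"
proof
  assume circ: "\<forall>j. circularity (tower C j)"
  have c0: "cpf (tower C j) t 0 z = cpf (tower C j) 0 0 z" for j t z
  proof -
    obtain m where m: "tower C j \<in> carrier_mat m m" using tower_facts[OF assms] by blast
    show ?thesis
    proof (rule pencil_const[OF m])
      fix t t'
      show "spectrum (herm_part (tower C j) t + 0 \<cdot>\<^sub>m defect (tower C j)) = spectrum (herm_part (tower C j) t' + 0 \<cdot>\<^sub>m defect (tower C j))"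
        unfolding herm_plus_zero[OF m] using circ unfolding circularity_def by blast
    qed
  qed
  show "defect_pencil_circularity C" unfolding defect_pencil_circularity_def
  proof (intro allI)
    fix \<tau> :: real and t t' :: real
    show "spectrum (herm_part C t + complex_of_real \<tau> \<cdot>\<^sub>m defect C) = spectrum (herm_part C t' + complex_of_real \<tau> \<cdot>\<^sub>m defect C)"
      unfolding spec_cpf[OF assms(1)] using tower_to_pencil[OF assms c0] by metis
  qed
next
  assume dpc: "defect_pencil_circularity C"
  have base_real: "cpf C t (complex_of_real \<tau>) z = cpf C 0 (complex_of_real \<tau>) z" for t \<tau> z
    by (rule pencil_const[OF assms(1)]) (use dpc in \<open>auto simp: defect_pencil_circularity_def\<close>)
  have base: "cpf C t s z = cpf C 0 s z" for t s z
  proof (rule cpf_param_eq[OF assms(1)])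
    show "infinite (range complex_of_real)"
    proof
      assume "finite (range complex_of_real)"
      moreover have "inj_on complex_of_real (UNIV :: real set)" by (auto simp: inj_on_def)
      ultimately have "finite (UNIV :: real set)" by (rule finite_imageD)
      then show False by (metis infinite_UNIV_char_0)
    qed
    fix s assume "s \<in> range complex_of_real"
    then show "cpf C t s z = cpf C 0 s z" using base_real by auto
  qed
  show "\<forall>j. circularity (tower C j)"
  proof
    fix j
    obtain m where m: "tower C j \<in> carrier_mat m m" using tower_facts[OF assms] by blast
    have e: "spectrum (herm_part (tower C j) t) = {z. cpf (tower C j) 0 0 z = 0}" for t
      using spec_cpf[OF m, of t 0] pencil_to_tower[OF assms base, of j t 0] unfolding herm_plus_zero[OF m]
      by simp
    show "circularity (tower C j)" unfolding circularity_def using e by simp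
  qed
qed

end
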